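(* Let $n$ be odd and let $P$ be a generic $n$-gon in $\mathbb{R}^3$. If $P$ is not regular, then its mirror image (image under a reflection of $\mathbb{R}^3$ in a plane) is regular.
   Context: For a closed polygon $P=A_1\ldots A_n$ in $\mathbb{R}^3$ put $v_1=\overline{A_1A_2},\ldots,v_n=\overline{A_nA_1}$, indices cyclic mod $n$. $P$ is generic if any two consecutive $v_i,v_{i+1}$ are not collinear and any three consecutive $v_i,v_{i+1},v_{i+2}$ are not coplanar. A support system of $P$ is a tuple $u_1,\ldots,u_n$ of vectors with $[u_i,u_{i+1}]=v_{i+1}$ for all $i$ (cyclically; $[\cdot,\cdot]$ the cross product). A generic polygon is regular if it has a support system. *)

theory Defs
  imports "HOL-Analysis.Analysis" "HOL-Analysis.Cross3"
begin

text \<open>A closed polygon with n vertices is given by A :: nat => real^3, where only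
  A 0, ..., A (n-1) matter (vertex A_{i+1} of the paper is A i); all indices are
  taken cyclically mod n. The edge vector v_{i+1} of the paper is edge_vec A n i.\<close>

definition edge_vec :: "(nat \<Rightarrow> real^3) \<Rightarrow> nat \<Rightarrow> nat \<Rightarrow> real^3" where
  "edge_vec A n i = A (Suc i mod n) - A (i mod n)"

definition generic_polygon :: "(nat \<Rightarrow> real^3) \<Rightarrow> nat \<Rightarrow> bool" where
  "generic_polygon A n \<longleftrightarrow>
     (\<forall>i. \<not> collinear {0, edge_vec A n i, edge_vec A n (Suc i)}) \<and>
     (\<forall>i. \<not> coplanar {0, edge_vec A n i, edge_vec A n (Suc i), edge_vec A n (Suc (Suc i))})"

definition support_system :: "(nat \<Rightarrow> real^3) \<Rightarrow> nat \<Rightarrow> (nat \<Rightarrow> real^3) \<Rightarrow> bool" where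
  "support_system A n u \<longleftrightarrow>
     (\<forall>i. cross3 (u (i mod n)) (u (Suc i mod n)) = edge_vec A n (Suc i))"

definition regular_polygon :: "(nat \<Rightarrow> real^3) \<Rightarrow> nat \<Rightarrow> bool" where
  "regular_polygon A n \<longleftrightarrow> generic_polygon A n \<and> (\<exists>u. support_system A n u)"

definition plane_reflection :: "real^3 \<Rightarrow> real \<Rightarrow> real^3 \<Rightarrow> real^3" where
  "plane_reflection w c x = x - (2 * (w \<bullet> x - c) / (w \<bullet> w)) *\<^sub>R w"

end

theory Submission imports Defs begin
unbundle cross3_syntax
unbundle no set_product_syntax

definition refl_lin :: "real^3 \<Rightarrow> real^3 \<Rightarrow> real^3" where
  "refl_lin w x = x - (2 * (w \<bullet> x) / (w \<bullet> w)) *\<^sub>R w"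

lemma cramer3: "((a::real^3) \<bullet> (b \<times> c)) *\<^sub>R x = (x \<bullet> (b \<times> c)) *\<^sub>R a + (a \<bullet> (x \<times> c)) *\<^sub>R b + (a \<bullet> (b \<times> x)) *\<^sub>R c"
  by (simp add: cross3_simps) (auto simp: forall_3 algebra_simps)

lemma triple_refl:
  fixes w a b c :: "real^3" assumes "w \<noteq> 0"
  shows "(refl_lin w a \<times> refl_lin w b) \<bullet> refl_lin w c = - ((a \<times> b) \<bullet> c)"
proof -
  have ww: "w \<bullet> w \<noteq> 0" using assms by simp
  have key: "(w \<bullet> w) * ((a \<times> b) \<bullet> c) = (w \<bullet> a) * ((w \<times> b) \<bullet> c) + (w \<bullet> b) * ((a \<times> w) \<bullet> c) + (w \<bullet> c) * ((a \<times> b) \<bullet> w)"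
    by (simp add: cross3_simps)
  define al where "al = 2 * (w \<bullet> a) / (w \<bullet> w)"
  define be where "be = 2 * (w \<bullet> b) / (w \<bullet> w)"
  define ga where "ga = 2 * (w \<bullet> c) / (w \<bullet> w)"
  have e1: "(a - al *\<^sub>R w) \<times> (b - be *\<^sub>R w) = a \<times> b - be *\<^sub>R (a \<times> w) - al *\<^sub>R (w \<times> b)"
    by (simp add: cross3_simps)
  have e2: "(a \<times> b - be *\<^sub>R (a \<times> w) - al *\<^sub>R (w \<times> b)) \<bullet> (c - ga *\<^sub>R w)
     = (a \<times> b) \<bullet> c - be * ((a \<times> w) \<bullet> c) - al * ((w \<times> b) \<bullet> c) - ga * ((a \<times> b) \<bullet> w)"
    by (simp add: inner_diff_left inner_diff_right dot_cross_self)
  have e3: "be * ((a \<times> w) \<bullet> c) + al * ((w \<times> b) \<bullet> c) + ga * ((a \<times> b) \<bullet> w) = 2 * ((a \<times> b) \<bullet> c)"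
  proof -
    have "be * ((a \<times> w) \<bullet> c) + al * ((w \<times> b) \<bullet> c) + ga * ((a \<times> b) \<bullet> w)
       = 2 * ((w \<bullet> w) * ((a \<times> b) \<bullet> c)) / (w \<bullet> w)"
      unfolding al_def be_def ga_def key using ww by (simp add: field_simps)
    then show ?thesis using ww by simp
  qed
  show ?thesis unfolding refl_lin_def al_def[symmetric] be_def[symmetric] ga_def[symmetric] e1 e2
    using e3 by linarith
qed

lemma cross_cross_mid: "((a::real^3) \<times> b) \<times> (b \<times> c) = ((a \<times> b) \<bullet> c) *\<^sub>R b"
  by (simp add: cross3_simps) (auto simp: forall_3 algebra_simps)


lemma cross_tri_swap: "(a::real^3) \<bullet> (b \<times> c) = (a \<times> b) \<bullet> c"
  by (simp add: cross3_simps)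

lemma triple_nonzero:
  fixes a b c :: "real^3"
  assumes "a \<times> b \<noteq> 0" "\<not> coplanar {0, a, b, c}"
  shows "(a \<times> b) \<bullet> c \<noteq> 0"
proof
  assume t: "(a \<times> b) \<bullet> c = 0"
  define N where "N = a \<times> b"
  have nn: "N \<bullet> N \<noteq> 0" using assms(1) N_def by simp
  have cr: "(a \<bullet> (b \<times> N)) *\<^sub>R c = (c \<bullet> (b \<times> N)) *\<^sub>R a + (a \<bullet> (c \<times> N)) *\<^sub>R b + (a \<bullet> (b \<times> c)) *\<^sub>R N"
    by (rule cramer3)
  have "a \<bullet> (b \<times> N) = N \<bullet> N" unfolding cross_tri_swap N_def ..
  moreover have "a \<bullet> (b \<times> c) = 0" using t by (simp add: cross_tri_swap)
  ultimately have "(N \<bullet> N) *\<^sub>R c = (c \<bullet> (b \<times> N)) *\<^sub>R a + (a \<bullet> (c \<times> N)) *\<^sub>R b"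
    using cr by simp
  then have cc: "c = ((c \<bullet> (b \<times> N)) / (N \<bullet> N)) *\<^sub>R a + ((a \<bullet> (c \<times> N)) / (N \<bullet> N)) *\<^sub>R b"
  proof -
    assume h: "(N \<bullet> N) *\<^sub>R c = (c \<bullet> (b \<times> N)) *\<^sub>R a + (a \<bullet> (c \<times> N)) *\<^sub>R b"
    have "c = (1 / (N \<bullet> N)) *\<^sub>R ((N \<bullet> N) *\<^sub>R c)" using nn by simp
    also have "\<dots> = (1 / (N \<bullet> N)) *\<^sub>R ((c \<bullet> (b \<times> N)) *\<^sub>R a + (a \<bullet> (c \<times> N)) *\<^sub>R b)"
      by (simp only: h)
    also have "\<dots> = ((c \<bullet> (b \<times> N)) / (N \<bullet> N)) *\<^sub>R a + ((a \<bullet> (c \<times> N)) / (N \<bullet> N)) *\<^sub>R b"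
      by (simp add: scaleR_add_right)
    finally show ?thesis .
  qed
  define p where "p = (c \<bullet> (b \<times> N)) / (N \<bullet> N)"
  define q where "q = (a \<bullet> (c \<times> N)) / (N \<bullet> N)"
  have "c = (1 - p - q) *\<^sub>R 0 + p *\<^sub>R a + q *\<^sub>R b \<and> (1 - p - q) + p + q = 1"
    using cc unfolding p_def q_def by simp
  then have "c \<in> affine hull {0, a, b}"
    unfolding affine_hull_3 by blast
  then have "{0, a, b, c} \<subseteq> affine hull {0, a, b}"
    by (simp add: hull_inc)
  then have "coplanar {0, a, b, c}" unfolding coplanar_def by blast
  with assms(2) show False by simp
qed

lemma edge_mod: "edge_vec A n (j mod n) = edge_vec A n j"
  unfolding edge_vec_def by (simp add: mod_Suc_eq)

definition tri :: "(nat \<Rightarrow> real^3) \<Rightarrow> nat \<Rightarrow> nat \<Rightarrow> real" where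
  "tri A n k = (edge_vec A n k \<times> edge_vec A n (Suc k)) \<bullet> edge_vec A n (Suc (Suc k))"

fun lseq :: "(nat \<Rightarrow> real) \<Rightarrow> real \<Rightarrow> nat \<Rightarrow> real" where
  "lseq c L 0 = L"
| "lseq c L (Suc k) = c k / lseq c L k"

lemma lseq_even: "lseq c L (2*j) = L * (\<Prod>i<j. c (2*i+1) / c (2*i))"
proof (induct j)
  case 0 then show ?case by simp
next
  case (Suc j)
  have "lseq c L (2 * Suc j) = lseq c L (Suc (Suc (2*j)))" by simp
  also have "\<dots> = c (2*j+1) / (c (2*j) / lseq c L (2*j))" by simp
  also have "\<dots> = lseq c L (2*j) * (c (2*j+1) / c (2*j))" by (simp add: field_simps)
  finally show ?case using Suc by simp
qed

lemma lseq_nz: "L \<noteq> 0 \<Longrightarrow> \<forall>i<k. c i \<noteq> 0 \<Longrightarrow> lseq c L k \<noteq> 0"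
  by (induction k) auto

lemma prod_pairs: "(\<Prod>k<2*(m::nat). (c k::real)) = (\<Prod>i<m. c (2*i) * c (2*i+1))"
proof (induction m)
  case 0 then show ?case by simp
next
  case (Suc m)
  have "(\<Prod>k<2*Suc m. c k) = (\<Prod>k<Suc (Suc (2*m)). c k)" by simp
  also have "\<dots> = (\<Prod>k<2*m. c k) * c (2*m) * c (2*m+1)" by simp
  finally show ?case using Suc by simp
qed

lemma seq_solve:
  fixes c :: "nat \<Rightarrow> real"
  assumes n: "n = 2*m+1" and nz: "\<forall>k<n. c k \<noteq> 0" and pos: "(\<Prod>k<n. c k) > 0"
  shows "\<exists>l. \<forall>k<n. l k * l (Suc k mod n) = c k"
proof -
  define r where "r = c (2*m) * (\<Prod>i<m. c (2*i) / c (2*i+1))"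
  define Q where "Q = (\<Prod>i<m. c (2*i+1))"
  have "(\<Prod>i<m. c (2*i) / c (2*i+1)) * Q * Q = (\<Prod>i<m. c (2*i) / c (2*i+1) * c (2*i+1) * c (2*i+1))"
    unfolding Q_def by (simp only: prod.distrib)
  also have "\<dots> = (\<Prod>i<m. c (2*i) * c (2*i+1))"
    by (rule prod.cong) (use nz n in auto)
  finally have rq: "r * (Q * Q) = (\<Prod>k<n. c k)"
    unfolding r_def n using prod_pairs[where c=c and m=m] by (simp add: mult_ac)
  have r0: "r > 0"
  proof (rule ccontr)
    assume "\<not> r > 0"
    then have "r * (Q*Q) \<le> 0" by (simp add: mult_nonpos_nonneg)
    with rq pos show False by simp
  qed
  define L where "L = sqrt r"
  have LL: "L * L = r" using r0 L_def by simp
  have L0: "L \<noteq> 0" using r0 L_def by simp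
  define l where "l = lseq c L"
  have lnz: "\<And>k. k < n \<Longrightarrow> l k \<noteq> 0" unfolding l_def using lseq_nz[OF L0] nz by auto
  show ?thesis
  proof (intro exI allI impI)
    fix k assume k: "k < n"
    show "l k * l (Suc k mod n) = c k"
    proof (cases "Suc k < n")
      case True
      then show ?thesis using lnz[OF k] by (simp add: l_def)
    next
      case False
      then have km: "k = 2*m" using k n by auto
      have sm: "Suc (2*m) mod n = 0" using n by simp
      have "l k * l (Suc k mod n) = L * L * (\<Prod>i<m. c (2*i+1) / c (2*i))"
        unfolding km sm l_def lseq_even by simp
      also have "\<dots> = c (2*m) * ((\<Prod>i<m. c (2*i) / c (2*i+1)) * (\<Prod>i<m. c (2*i+1) / c (2*i)))"
        unfolding LL r_def by (simp add: mult_ac)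
      also have "(\<Prod>i<m. c (2*i) / c (2*i+1)) * (\<Prod>i<m. c (2*i+1) / c (2*i)) = (\<Prod>i<m. (1::real))"
        unfolding prod.distrib[symmetric] by (rule prod.cong) (use nz n in auto)
      finally show ?thesis using km by simp
    qed
  qed
qed

lemma support_exists:
  assumes "odd n" "\<forall>k. tri A n k \<noteq> 0" "(\<Prod>k<n. tri A n k) > 0"
  shows "\<exists>u. support_system A n u"
proof -
  obtain m where n: "n = 2*m+1" using assms(1) oddE by blast
  define c where "c k = 1 / tri A n k" for k
  have cnz: "\<forall>k<n. c k \<noteq> 0" using assms(2) by (simp add: c_def)
  have "(\<Prod>k<n. c k) = 1 / (\<Prod>k<n. tri A n k)" unfolding c_def by (simp add: prod_dividef)
  then have "(\<Prod>k<n. c k) > 0" using assms(3) by simp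
  then obtain l where l: "\<forall>k<n. l k * l (Suc k mod n) = c k" using seq_solve[OF n cnz] by blast
  define e where "e = edge_vec A n"
  have em: "\<And>j. e (j mod n) = e j" unfolding e_def by (rule edge_mod)
  define u where "u i = l i *\<^sub>R (e i \<times> e (Suc i))" for i
  have "support_system A n u"
    unfolding support_system_def
  proof
    fix i
    define k where "k = i mod n"
    have kn: "k < n" using n k_def by simp
    define j where "j = Suc k mod n"
    have ji: "Suc i mod n = j" unfolding j_def k_def by (simp add: mod_Suc_eq)
    have ej: "e j = e (Suc k)" unfolding j_def by (rule em)
    have ej2: "e (Suc j) = e (Suc (Suc k))"
      by (metis em j_def mod_Suc_eq)
    have ei: "e (Suc i) = e (Suc k)" by (metis em ji j_def)
    have "u k \<times> u j = (l k * l j) *\<^sub>R ((e k \<times> e (Suc k)) \<times> (e (Suc k) \<times> e (Suc (Suc k))))"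
      unfolding u_def ej ej2 by (simp add: cross_mult_left cross_mult_right)
    also have "\<dots> = (l k * l j * tri A n k) *\<^sub>R e (Suc k)"
      unfolding cross_cross_mid tri_def e_def by simp
    also have "l k * l j * tri A n k = 1"
      using l kn assms(2) unfolding j_def c_def by simp
    finally show "u (i mod n) \<times> u (Suc i mod n) = edge_vec A n (Suc i)"
      using ji ei unfolding k_def e_def by simp
  qed
  then show ?thesis by blast
qed

lemma generic_tri: "generic_polygon A n \<Longrightarrow> tri A n k \<noteq> 0"
  unfolding generic_polygon_def tri_def
  by (metis triple_nonzero cross_eq_0)

lemma refl_lin_linear: "linear (refl_lin w)"
  unfolding refl_lin_def
  by (rule linearI) (simp_all add: inner_add_right add_divide_distrib algebra_simps scaleR_add_left)

lemma refl_lin_inv: "w \<noteq> 0 \<Longrightarrow> refl_lin w (refl_lin w x) = x"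
  unfolding refl_lin_def by (simp add: inner_diff_right algebra_simps)

lemma refl_lin_inj: "w \<noteq> 0 \<Longrightarrow> inj (refl_lin w)"
  by (metis injI refl_lin_inv)

lemma edge_refl: "edge_vec (\<lambda>i. plane_reflection w c (A i)) n k = refl_lin w (edge_vec A n k)"
  unfolding edge_vec_def plane_reflection_def refl_lin_def
  by (simp add: inner_diff_right algebra_simps diff_divide_distrib)

theorem mainTheorem2:
  fixes A :: "nat \<Rightarrow> real^3" and n :: nat
  assumes "odd n"
    and "generic_polygon A n"
    and "\<not> regular_polygon A n"
  shows "\<forall>w c. w \<noteq> 0 \<longrightarrow> regular_polygon (\<lambda>i. plane_reflection w c (A i)) n"
proof (intro allI impI)
  fix w :: "real^3" and c :: real
  assume w: "w \<noteq> 0"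
  define B where "B = (\<lambda>i. plane_reflection w c (A i))"
  have tA: "\<And>k. tri A n k \<noteq> 0" using generic_tri[OF assms(2)] .
  have tB: "\<And>k. tri B n k = - tri A n k"
    unfolding tri_def B_def edge_refl using triple_refl[OF w] by simp
  have ns: "\<not> (\<exists>u. support_system A n u)" using assms(2,3) unfolding regular_polygon_def by blast
  have "\<not> (\<Prod>k<n. tri A n k) > 0" using support_exists[OF assms(1)] tA ns by blast
  moreover have "(\<Prod>k<n. tri A n k) \<noteq> 0" using tA by simp
  ultimately have negA: "(\<Prod>k<n. tri A n k) < 0" by linarith
  have "(\<Prod>k<n. tri B n k) = (\<Prod>k<n. (-1) * tri A n k)" unfolding tB by simp
  also have "\<dots> = (-1)^n * (\<Prod>k<n. tri A n k)" by (subst prod.distrib) simp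
  also have "\<dots> = - (\<Prod>k<n. tri A n k)" using assms(1) by simp
  finally have posB: "(\<Prod>k<n. tri B n k) > 0" using negA by simp
  have suppB: "\<exists>u. support_system B n u"
    using support_exists[OF assms(1)] posB tB tA by simp
  have genB: "generic_polygon B n"
    unfolding generic_polygon_def
  proof (intro conjI allI)
    fix i
    have "edge_vec B n i \<times> edge_vec B n (Suc i) \<noteq> 0"
    proof
      assume "edge_vec B n i \<times> edge_vec B n (Suc i) = 0"
      then have "tri B n i = 0" unfolding tri_def by simp
      with tB tA show False by simp
    qed
    then show "\<not> collinear {0, edge_vec B n i, edge_vec B n (Suc i)}" by (simp add: cross_eq_0)
    have img: "{0, edge_vec B n i, edge_vec B n (Suc i), edge_vec B n (Suc (Suc i))}
       = refl_lin w ` {0, edge_vec A n i, edge_vec A n (Suc i), edge_vec A n (Suc (Suc i))}"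
      unfolding B_def edge_refl using linear_0[OF refl_lin_linear] by simp
    show "\<not> coplanar {0, edge_vec B n i, edge_vec B n (Suc i), edge_vec B n (Suc (Suc i))}"
      unfolding img coplanar_linear_image_eq[OF refl_lin_linear refl_lin_inj[OF w]]
      using assms(2) unfolding generic_polygon_def by blast
  qed
  show "regular_polygon (\<lambda>i. plane_reflection w c (A i)) n"
    using genB suppB unfolding regular_polygon_def B_def by blast
qed

end
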